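(* Let $d\ge2$, $1\le k<d$, $D=\operatorname{diag}(1,\dots,1,0,\dots,0)\in\mathbb{R}^{d\times d}$ with $k$ ones, and $C\in\mathbb{R}^{d\times d}$ satisfy condition (A). Let $K$ be the symmetric positive definite solution of $2D=CK+KC^T$, $Q:=KC^TK^{-1}$, and $\mu:=\min\{\operatorname{Re}\lambda:\lambda \text{ eigenvalue of } C\}$ (so $\mu>0$). Let $\lambda_1,\dots,\lambda_{m_0}$ be the eigenvalues of $C$ with real part $\mu$. (i) If every $\lambda_m$, $1\le m\le m_0$, is non-defective, then there exists a symmetric positive definite $P\in\mathbb{R}^{d\times d}$ with $QP+PQ^T\geq 2\mu P$. (ii) If some $\lambda_m$, $1\le m\le m_0$, is defective, then for every $\varepsilon>0$ there exists a symmetric positive definite $P=P(\varepsilon)\in\mathbb{R}^{d\times d}$ with $QP+PQ^T\ge2(\mu-\varepsilon)P$. (iii) For any such matrix $P$, any admissible generating function $\psi$ and any $\psi$-compatible function $f_0$, one has $S_\psi(f_0)<\infty$.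
   Context: Condition (A): (a) no non-trivial subspace of $\ker D$ is invariant under $C^T$; (b) all eigenvalues of $C$ have positive real part. An eigenvalue is defective if its geometric multiplicity is strictly less than its algebraic multiplicity. Matrix inequalities are in the sense of quadratic forms. $f_\infty(x)=(2\pi)^{-d/2}(\det K)^{-1/2}\exp(-x^TK^{-1}x/2)$. A function $\psi\not\equiv0$, $\psi\in C([0,\infty))\cap C^4((0,\infty))$, is an admissible generating function if $\psi(1)=\psi'(1)=0$, $\psi''\ge0$ and $(\psi''')^2\le\frac12\psi''\psi^{IV}$ on $(0,\infty)$ (for the quadratic function $\psi(s)=(s-1)^2$ one works on all of $\mathbb{R}$ and admits signed $f$). For $f_0\in L^1(\mathbb{R}^d)$, $f_0\ge0$ (any sign if $\psi$ quadratic), $\int f_0=1$, set $w(x):=\int_1^{f_0(x)/f_\infty(x)}\sqrt{\psi''(s)}\,ds$; $f_0$ is $\psi$-compatible if $\nabla w\in L^2(\mathbb{R}^d,f_\infty)$. Then $S_\psi(f_0):=\int_{\mathbb{R}^d}(\nabla w)^TP(\nabla w)f_\infty\,dx$. *)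

theory Defs
  imports "HOL-Analysis.Analysis" "HOL-Computational_Algebra.Polynomial"
begin

text \<open>D = diag(1,...,1,0,...,0) with k ones; the index type is well-ordered so that
  "the first k indices" makes sense.\<close>
definition Dmat :: "nat \<Rightarrow> real^('n::{finite,wellorder})^('n::{finite,wellorder})" where
  "Dmat k = (\<chi> i j. if i = j \<and> card {l. l < i} < k then 1 else 0)"

definition cmat :: "real^'n^'m \<Rightarrow> complex^'n^'m" where
  "cmat A = (\<chi> i j. complex_of_real (A $ i $ j))"

definition c_eigenvalue :: "real^'n^'n \<Rightarrow> complex \<Rightarrow> bool" where
  "c_eigenvalue A lam \<longleftrightarrow> (\<exists>v. v \<noteq> 0 \<and> cmat A *v v = lam *s v)"

definition cspec :: "real^'n^'n \<Rightarrow> complex set" where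
  "cspec A = {lam. c_eigenvalue A lam}"

definition charpoly :: "real^'n^'n \<Rightarrow> complex poly" where
  "charpoly A = det (\<chi> i j. (if i = j then [:0, 1:] else 0) - [:complex_of_real (A $ i $ j):])"

definition alg_mult :: "real^'n^'n \<Rightarrow> complex \<Rightarrow> nat" where
  "alg_mult A lam = order lam (charpoly A)"

definition geom_mult :: "real^'n^'n \<Rightarrow> complex \<Rightarrow> nat" where
  "geom_mult A lam = vec.dim {v :: complex^'n. cmat A *v v = lam *s v}"

definition defective :: "real^'n^'n \<Rightarrow> complex \<Rightarrow> bool" where
  "defective A lam \<longleftrightarrow> geom_mult A lam < alg_mult A lam"

definition null_space :: "real^'n^'m \<Rightarrow> (real^'n) set" where
  "null_space A = {x. A *v x = 0}"

definition condA :: "real^'n^'n \<Rightarrow> real^'n^'n \<Rightarrow> bool" where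
  "condA D C \<longleftrightarrow>
     (\<forall>V. subspace V \<and> V \<subseteq> null_space D \<and> V \<noteq> {0} \<longrightarrow> \<not> ((\<lambda>x. transpose C *v x) ` V \<subseteq> V))
   \<and> (\<forall>lam \<in> cspec C. Re lam > 0)"

definition sym_mat :: "real^'n^'n \<Rightarrow> bool" where
  "sym_mat A \<longleftrightarrow> transpose A = A"

definition pos_def :: "real^'n^'n \<Rightarrow> bool" where
  "pos_def A \<longleftrightarrow> sym_mat A \<and> (\<forall>x. x \<noteq> 0 \<longrightarrow> x \<bullet> (A *v x) > 0)"

definition mat_ge :: "real^'n^'n \<Rightarrow> real^'n^'n \<Rightarrow> bool" where
  "mat_ge A B \<longleftrightarrow> (\<forall>x. x \<bullet> ((A - B) *v x) \<ge> 0)"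

definition Qmat :: "real^'n^'n \<Rightarrow> real^'n^'n \<Rightarrow> real^'n^'n" where
  "Qmat K C = K ** transpose C ** matrix_inv K"

definition mu :: "real^'n^'n \<Rightarrow> real" where
  "mu C = Min (Re ` cspec C)"

definition finf :: "real^'n^'n \<Rightarrow> real^'n \<Rightarrow> real" where
  "finf K x = (2 * pi) powr (- real CARD('n) / 2) * (det K) powr (-1/2)
              * exp (- (x \<bullet> (matrix_inv K *v x)) / 2)"

definition Ck_on :: "nat \<Rightarrow> real set \<Rightarrow> (real \<Rightarrow> real) \<Rightarrow> bool" where
  "Ck_on k S f \<longleftrightarrow> (\<forall>j<k. \<forall>x\<in>S. ((deriv ^^ j) f) differentiable (at x))
                    \<and> continuous_on S ((deriv ^^ k) f)"

definition admissible :: "(real \<Rightarrow> real) \<Rightarrow> bool" where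
  "admissible \<psi> \<longleftrightarrow>
     (\<exists>s\<ge>0. \<psi> s \<noteq> 0) \<and> continuous_on {0..} \<psi> \<and> Ck_on 4 {0<..} \<psi>
   \<and> \<psi> 1 = 0 \<and> deriv \<psi> 1 = 0
   \<and> (\<forall>s>0. (deriv ^^ 2) \<psi> s \<ge> 0)
   \<and> (\<forall>s>0. ((deriv ^^ 3) \<psi> s)\<^sup>2 \<le> 1/2 * (deriv ^^ 2) \<psi> s * (deriv ^^ 4) \<psi> s)"

definition partial :: "(real^'n \<Rightarrow> real) \<Rightarrow> 'n \<Rightarrow> real^'n \<Rightarrow> real" where
  "partial f i x = frechet_derivative f (at x) (axis i 1)"

fun Ck_fun :: "nat \<Rightarrow> (real^'n \<Rightarrow> real) \<Rightarrow> bool" where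
  "Ck_fun 0 f = continuous_on UNIV f"
| "Ck_fun (Suc n) f = ((\<forall>x. f differentiable (at x)) \<and> (\<forall>i. Ck_fun n (partial f i)))"

definition test_fun :: "(real^'n \<Rightarrow> real) \<Rightarrow> bool" where
  "test_fun \<phi> \<longleftrightarrow> (\<forall>n. Ck_fun n \<phi>) \<and> compact (closure {x. \<phi> x \<noteq> 0})"

definition weak_gradient :: "(real^'n \<Rightarrow> real) \<Rightarrow> (real^'n \<Rightarrow> real^'n) \<Rightarrow> bool" where
  "weak_gradient w g \<longleftrightarrow>
     (\<forall>S. compact S \<longrightarrow> set_integrable lborel S w \<and> (\<forall>i. set_integrable lborel S (\<lambda>x. g x $ i)))
   \<and> (\<forall>\<phi> i. test_fun \<phi> \<longrightarrow>
        (\<integral>x. w x * partial \<phi> i x \<partial>lborel) = - (\<integral>x. g x $ i * \<phi> x \<partial>lborel))"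

definition wfun :: "(real \<Rightarrow> real) \<Rightarrow> real^'n^'n \<Rightarrow> (real^'n \<Rightarrow> real) \<Rightarrow> real^'n \<Rightarrow> real" where
  "wfun \<psi> K f0 x = (LBINT s=1..(f0 x / finf K x). sqrt ((deriv ^^ 2) \<psi> s))"

definition initial_datum :: "(real \<Rightarrow> real) \<Rightarrow> (real^'n \<Rightarrow> real) \<Rightarrow> bool" where
  "initial_datum \<psi> f0 \<longleftrightarrow> integrable lborel f0 \<and> (\<integral>x. f0 x \<partial>lborel) = 1
     \<and> ((AE x in lborel. f0 x \<ge> 0) \<or> (\<forall>s. \<psi> s = (s - 1)\<^sup>2))"

text \<open>S_psi(f0), computed with a weak gradient g of w that lies in L^2(f_inf)\<close>
definition S_psi :: "real^'n^'n \<Rightarrow> real^'n^'n \<Rightarrow> (real^'n \<Rightarrow> real^'n) \<Rightarrow> ennreal" where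
  "S_psi K P g = (\<integral>\<^sup>+x. ennreal (g x \<bullet> (P *v g x) * finf K x) \<partial>lborel)"

definition psi_compatible_grad :: "(real \<Rightarrow> real) \<Rightarrow> real^'n^'n \<Rightarrow> (real^'n \<Rightarrow> real) \<Rightarrow> (real^'n \<Rightarrow> real^'n) \<Rightarrow> bool" where
  "psi_compatible_grad \<psi> K f0 g \<longleftrightarrow> weak_gradient (wfun \<psi> K f0) g
     \<and> (\<lambda>x. g x) \<in> borel_measurable lborel
     \<and> (\<integral>\<^sup>+x. ennreal ((norm (g x))\<^sup>2 * finf K x) \<partial>lborel) < \<infinity>"

end

theory Submission
  imports Defs "Jordan_Normal_Form.Jordan_Normal_Form_Existence"
begin

lemma jm_struct:
  fixes n_as :: "(nat \<times> 'a::zero_neq_one) list"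
  shows "\<forall>i j. i < sum_list (map fst n_as) \<longrightarrow> j < sum_list (map fst n_as) \<longrightarrow>
      jordan_matrix n_as $$ (i,j) \<noteq> 0 \<longrightarrow> j = i \<or> j = Suc i"
   and "\<forall>i. Suc i < sum_list (map fst n_as) \<longrightarrow>
      (jordan_matrix n_as $$ (i,Suc i) = 0 \<or> jordan_matrix n_as $$ (i,Suc i) = 1)"
   and "\<forall>i. Suc i < sum_list (map fst n_as) \<longrightarrow> jordan_matrix n_as $$ (i,Suc i) = 1 \<longrightarrow>
      jordan_matrix n_as $$ (i,i) = jordan_matrix n_as $$ (Suc i,Suc i)"
proof (induct n_as)
  case Nil
  show "\<forall>i j. i < sum_list (map fst ([]::(nat \<times> 'a) list)) \<longrightarrow> j < sum_list (map fst ([]::(nat \<times> 'a) list)) \<longrightarrow>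
      jordan_matrix ([]::(nat \<times> 'a) list) $$ (i,j) \<noteq> 0 \<longrightarrow> j = i \<or> j = Suc i" by simp
  show "\<forall>i. Suc i < sum_list (map fst ([]::(nat \<times> 'a) list)) \<longrightarrow>
      (jordan_matrix ([]::(nat \<times> 'a) list) $$ (i,Suc i) = 0 \<or> jordan_matrix ([]::(nat \<times> 'a) list) $$ (i,Suc i) = 1)" by simp
  show "\<forall>i. Suc i < sum_list (map fst ([]::(nat \<times> 'a) list)) \<longrightarrow> jordan_matrix ([]::(nat \<times> 'a) list) $$ (i,Suc i) = 1 \<longrightarrow>
      jordan_matrix ([]::(nat \<times> 'a) list) $$ (i,i) = jordan_matrix ([]::(nat \<times> 'a) list) $$ (Suc i,Suc i)" by simp
next
  case (Cons x n_as)
  obtain m a where x: "x = (m,a)" by force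
  let ?N = "sum_list (map fst n_as)"
  have JC: "jordan_matrix (x # n_as) = four_block_mat (jordan_block m a) (0\<^sub>m m ?N) (0\<^sub>m ?N m) (jordan_matrix n_as)"
    unfolding x by (rule jordan_matrix_Cons)
  have idx: "\<And>i j. i < m + ?N \<Longrightarrow> j < m + ?N \<Longrightarrow> jordan_matrix (x # n_as) $$ (i,j) =
     (if i < m then if j < m then (if i = j then a else if Suc i = j then 1 else 0) else 0
      else if j < m then 0 else jordan_matrix n_as $$ (i - m, j - m))"
    unfolding JC by (subst index_mat_four_block) auto
  have s: "sum_list (map fst (x # n_as)) = m + ?N" using x by simp
  show "\<forall>i j. i < sum_list (map fst (x#n_as)) \<longrightarrow> j < sum_list (map fst (x#n_as)) \<longrightarrow>
      jordan_matrix (x#n_as) $$ (i,j) \<noteq> 0 \<longrightarrow> j = i \<or> j = Suc i"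
  proof (intro allI impI)
    fix i j assume a1: "i < sum_list (map fst (x#n_as))" "j < sum_list (map fst (x#n_as))"
      and a2: "jordan_matrix (x#n_as) $$ (i,j) \<noteq> 0"
    show "j = i \<or> j = Suc i"
    proof (cases "i < m")
      case True then show ?thesis using a1 a2 idx[of i j] s by (auto split: if_splits)
    next
      case False
      then have jm: "j \<ge> m" using a1 a2 idx[of i j] s by (auto split: if_splits)
      have "jordan_matrix n_as $$ (i-m, j-m) \<noteq> 0" using False jm a1 a2 idx[of i j] s by auto
      then have "j - m = i - m \<or> j - m = Suc (i - m)" using Cons(1)[rule_format, of "i-m" "j-m"] a1 s False jm by auto
      then show ?thesis using False jm by arith
    qed
  qed
  show "\<forall>i. Suc i < sum_list (map fst (x#n_as)) \<longrightarrow>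
      (jordan_matrix (x#n_as) $$ (i,Suc i) = 0 \<or> jordan_matrix (x#n_as) $$ (i,Suc i) = 1)"
  proof (intro allI impI)
    fix i assume a1: "Suc i < sum_list (map fst (x#n_as))"
    show "jordan_matrix (x#n_as) $$ (i,Suc i) = 0 \<or> jordan_matrix (x#n_as) $$ (i,Suc i) = 1"
    proof (cases "i < m")
      case True then show ?thesis using a1 idx[of i "Suc i"] s by (auto split: if_splits)
    next
      case False
      then have "Suc i - m = Suc (i - m)" by auto
      then show ?thesis using False a1 idx[of i "Suc i"] s Cons(2)[rule_format, of "i-m"] by (auto split: if_splits)
    qed
  qed
  show "\<forall>i. Suc i < sum_list (map fst (x#n_as)) \<longrightarrow> jordan_matrix (x#n_as) $$ (i,Suc i) = 1 \<longrightarrow>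
      jordan_matrix (x#n_as) $$ (i,i) = jordan_matrix (x#n_as) $$ (Suc i,Suc i)"
  proof (intro allI impI)
    fix i assume a1: "Suc i < sum_list (map fst (x#n_as))" and a2: "jordan_matrix (x#n_as) $$ (i,Suc i) = 1"
    show "jordan_matrix (x#n_as) $$ (i,i) = jordan_matrix (x#n_as) $$ (Suc i,Suc i)"
    proof (cases "i < m")
      case True then show ?thesis using a1 a2 idx[of i "Suc i"] idx[of i i] idx[of "Suc i" "Suc i"] s by (auto split: if_splits)
    next
      case False
      then have "Suc i - m = Suc (i - m)" by auto
      then show ?thesis using False a1 a2 idx[of i "Suc i"] idx[of i i] idx[of "Suc i" "Suc i"] s Cons(3)[rule_format, of "i-m"] by (auto split: if_splits)
    qed
  qed
qed

lemma jnf_nat: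
  fixes A :: "nat \<Rightarrow> nat \<Rightarrow> complex"
  obtains P Q J where
   "\<forall>i<n. \<forall>j<n. (\<Sum>k<n. P i k * Q k j) = (if i = j then 1 else 0)"
   "\<forall>i<n. \<forall>j<n. (\<Sum>k<n. Q i k * P k j) = (if i = j then 1 else 0)"
   "\<forall>i<n. \<forall>j<n. A i j = (\<Sum>k<n. P i k * (\<Sum>l<n. J k l * Q l j))"
   "\<forall>i<n. \<forall>j<n. J i j \<noteq> 0 \<longrightarrow> j = i \<or> j = Suc i"
   "\<forall>i. Suc i < n \<longrightarrow> (J i (Suc i) = 0 \<or> J i (Suc i) = 1)"
   "\<forall>i. Suc i < n \<longrightarrow> J i (Suc i) = 1 \<longrightarrow> J i i = J (Suc i) (Suc i)"
proof -
  let ?A = "mat n n (\<lambda>(i,j). A i j)"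
  have Ac: "?A \<in> carrier_mat n n" by simp
  from char_poly_factorized[OF Ac] obtain as where "char_poly ?A = (\<Prod> a \<leftarrow> as. [:- a, 1:])" by blast
  from jordan_nf_exists[OF Ac this] obtain n_as where jnf: "jordan_nf ?A n_as" by blast
  let ?J = "jordan_matrix n_as"
  from jnf have "similar_mat ?A ?J" unfolding jordan_nf_def by auto
  then obtain n' P Q where PQ': "{?A, ?J, P, Q} \<subseteq> carrier_mat n' n'" "P * Q = 1\<^sub>m n'" "Q * P = 1\<^sub>m n'"
     "?A = P * ?J * Q"
    using similar_matD[of ?A ?J] by blast
  have "n' = n" using PQ'(1) by auto
  then have PQ: "{?A, ?J, P, Q} \<subseteq> carrier_mat n n" "P * Q = 1\<^sub>m n" "Q * P = 1\<^sub>m n"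
     "?A = P * ?J * Q" using PQ' by auto
  have N: "sum_list (map fst n_as) = n" using PQ(1) by (metis carrier_matD(1) insert_subset jordan_matrix_dim(1))
  have c: "P \<in> carrier_mat n n" "Q \<in> carrier_mat n n" "?J \<in> carrier_mat n n" using PQ(1) by auto
  show ?thesis
  proof (rule that[of "\<lambda>i j. P $$ (i,j)" "\<lambda>i j. Q $$ (i,j)" "\<lambda>i j. ?J $$ (i,j)"])
    show "\<forall>i<n. \<forall>j<n. (\<Sum>k<n. P $$ (i, k) * Q $$ (k, j)) = (if i = j then 1 else 0)"
    proof (intro allI impI)
      fix i j assume "i < n" "j < n"
      then have "(P * Q) $$ (i,j) = (\<Sum>k<n. P $$ (i, k) * Q $$ (k, j))" using c
        by (simp add: scalar_prod_def atLeast0LessThan)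
      then show "(\<Sum>k<n. P $$ (i, k) * Q $$ (k, j)) = (if i = j then 1 else 0)"
        using PQ(2) \<open>i<n\<close> \<open>j<n\<close> by simp
    qed
    show "\<forall>i<n. \<forall>j<n. (\<Sum>k<n. Q $$ (i, k) * P $$ (k, j)) = (if i = j then 1 else 0)"
    proof (intro allI impI)
      fix i j assume "i < n" "j < n"
      then have "(Q * P) $$ (i,j) = (\<Sum>k<n. Q $$ (i, k) * P $$ (k, j))" using c
        by (simp add: scalar_prod_def atLeast0LessThan)
      then show "(\<Sum>k<n. Q $$ (i, k) * P $$ (k, j)) = (if i = j then 1 else 0)"
        using PQ(3) \<open>i<n\<close> \<open>j<n\<close> by simp
    qed
    show "\<forall>i<n. \<forall>j<n. A i j = (\<Sum>k<n. P $$ (i,k) * (\<Sum>l<n. ?J $$ (k,l) * Q $$ (l,j)))"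
    proof (intro allI impI)
      fix i j assume ij: "i < n" "j < n"
      have "A i j = ?A $$ (i,j)" using ij by simp
      also have "\<dots> = (P * (?J * Q)) $$ (i,j)" using PQ(4) c by (simp add: assoc_mult_mat[of P n n ?J n Q n])
      also have "\<dots> = (\<Sum>k<n. P $$ (i,k) * (\<Sum>l<n. ?J $$ (k,l) * Q $$ (l,j)))"
        using ij c N by (simp add: scalar_prod_def atLeast0LessThan)
      finally show "A i j = (\<Sum>k<n. P $$ (i,k) * (\<Sum>l<n. ?J $$ (k,l) * Q $$ (l,j)))" .
    qed
    show "\<forall>i<n. \<forall>j<n. ?J $$ (i,j) \<noteq> 0 \<longrightarrow> j = i \<or> j = Suc i" using jm_struct(1)[of n_as] N by auto
    show "\<forall>i. Suc i < n \<longrightarrow> (?J $$ (i,Suc i) = 0 \<or> ?J $$ (i,Suc i) = 1)" using jm_struct(2)[of n_as] N by auto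
    show "\<forall>i. Suc i < n \<longrightarrow> ?J $$ (i,Suc i) = 1 \<longrightarrow> ?J $$ (i,i) = ?J $$ (Suc i,Suc i)"
      using jm_struct(3)[of n_as] N by auto
  qed
qed

no_notation Matrix.vec_index (infixl "$" 100)
no_notation Matrix.scalar_prod (infix "\<bullet>" 70)

lemma vec_ext: "(\<And>i. (x::'a^'n) $ i = y $ i) \<Longrightarrow> x = y"
  by (simp add: Finite_Cartesian_Product.vec_eq_iff)

definition idx :: "'n::{finite,wellorder} \<Rightarrow> nat" where "idx a = card {l. l < a}"

lemma idx_mono: "(a::'n::{finite,wellorder}) < b \<Longrightarrow> idx a < idx b"
  unfolding idx_def by (rule psubset_card_mono) auto

lemma idx_lt: "idx (a::'n::{finite,wellorder}) < CARD('n)"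
  unfolding idx_def by (rule psubset_card_mono) auto

lemma idx_inj: "inj (idx :: 'n::{finite,wellorder} \<Rightarrow> nat)"
  by (metis idx_mono injI less_irrefl neqE)

lemma idx_eq_iff[simp]: "idx (a::'n::{finite,wellorder}) = idx b \<longleftrightarrow> a = b"
  using idx_inj by (auto dest: injD)

lemma bij_idx: "bij_betw (idx :: 'n::{finite,wellorder} \<Rightarrow> nat) UNIV {..<CARD('n)}"
proof -
  have "idx ` (UNIV::'n set) \<subseteq> {..<CARD('n)}" using idx_lt by auto
  moreover have "card (idx ` (UNIV::'n set)) = card {..<CARD('n)}"
    using card_image[OF idx_inj] by simp
  ultimately have "idx ` (UNIV::'n set) = {..<CARD('n)}" by (simp add: card_subset_eq)
  then show ?thesis using idx_inj by (simp add: bij_betw_def)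
qed

definition ix :: "nat \<Rightarrow> 'n::{finite,wellorder}" where "ix = inv_into UNIV idx"

lemma ix_idx[simp]: "ix (idx a) = a"
  unfolding ix_def by (rule inv_f_f[OF idx_inj])

lemma idx_ix[simp]: "i < CARD('n::{finite,wellorder}) \<Longrightarrow> idx (ix i :: 'n) = i"
  unfolding ix_def by (rule bij_betw_inv_into_right[OF bij_idx]) simp

lemma sum_idx: "(\<Sum>a\<in>(UNIV::'n::{finite,wellorder} set). f (idx a)) = (\<Sum>i<CARD('n). f i)"
  using sum.reindex_bij_betw[OF bij_idx[where 'n='n], of f] by simp

lemma sum_ix: "(\<Sum>a\<in>(UNIV::'n::{finite,wellorder} set). g a) = (\<Sum>i<CARD('n). g (ix i))"
  using sum_idx[where 'n='n, of "\<lambda>i. g (ix i)"] by simp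

lemma jordan_vec:
  fixes C :: "real^('n::{finite,wellorder})^('n::{finite,wellorder})"
  obtains P Q J :: "complex^('n::{finite,wellorder})^('n::{finite,wellorder})" and lam :: "nat \<Rightarrow> complex" and L :: "nat \<Rightarrow> bool" where
    "P ** Q = Finite_Cartesian_Product.mat 1" "Q ** P = Finite_Cartesian_Product.mat 1" "cmat C = P ** (J ** Q)"
    "\<And>a b. J $ a $ b = (if a = b then lam (idx a) else if idx b = Suc (idx a) \<and> L (idx a) then 1 else 0)"
    "\<And>i. L i \<Longrightarrow> Suc i < CARD('n) \<and> lam (Suc i) = lam i"
proof -
  let ?n = "CARD('n)"
  obtain Pn Qn Jn where
   H1: "\<forall>i<?n. \<forall>j<?n. (\<Sum>k<?n. Pn i k * Qn k j) = (if i = j then 1 else 0)" and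
   H2: "\<forall>i<?n. \<forall>j<?n. (\<Sum>k<?n. Qn i k * Pn k j) = (if i = j then 1 else 0)" and
   H3: "\<forall>i<?n. \<forall>j<?n. cmat C $ ix i $ ix j = (\<Sum>k<?n. Pn i k * (\<Sum>l<?n. Jn k l * Qn l j))" and
   H4: "\<forall>i<?n. \<forall>j<?n. Jn i j \<noteq> 0 \<longrightarrow> j = i \<or> j = Suc i" and
   H5: "\<forall>i. Suc i < ?n \<longrightarrow> (Jn i (Suc i) = 0 \<or> Jn i (Suc i) = 1)" and
   H6: "\<forall>i. Suc i < ?n \<longrightarrow> Jn i (Suc i) = 1 \<longrightarrow> Jn i i = Jn (Suc i) (Suc i)"
    by (rule jnf_nat[of ?n "\<lambda>i j. cmat C $ ix i $ ix j"])
  define P :: "complex^('n::{finite,wellorder})^('n::{finite,wellorder})" where "P = (\<chi> a b. Pn (idx a) (idx b))"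
  define Q :: "complex^('n::{finite,wellorder})^('n::{finite,wellorder})" where "Q = (\<chi> a b. Qn (idx a) (idx b))"
  define J :: "complex^('n::{finite,wellorder})^('n::{finite,wellorder})" where "J = (\<chi> a b. Jn (idx a) (idx b))"
  define lam where "lam i = Jn i i" for i
  define L where "L i = (Suc i < ?n \<and> Jn i (Suc i) = 1)" for i
  show ?thesis
  proof (rule that[of P Q J lam L])
    show "P ** Q = Finite_Cartesian_Product.mat 1"
    proof (intro vec_ext)
      fix a b
      have "(P ** Q) $ a $ b = (\<Sum>(c::'n)\<in>UNIV. Pn (idx a) (idx c) * Qn (idx c) (idx b))"
        unfolding P_def Q_def matrix_matrix_mult_def by simp
      also have "\<dots> = (\<Sum>k<?n. Pn (idx a) k * Qn k (idx b))"
        by (rule sum_idx)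
      also have "\<dots> = (if a = b then 1 else 0)" using H1 idx_lt[of a] idx_lt[of b] by simp
      finally show "(P ** Q) $ a $ b = Finite_Cartesian_Product.mat 1 $ a $ b"
        unfolding Finite_Cartesian_Product.mat_def by simp
    qed
    show "Q ** P = Finite_Cartesian_Product.mat 1"
    proof (intro vec_ext)
      fix a b
      have "(Q ** P) $ a $ b = (\<Sum>(c::'n)\<in>UNIV. Qn (idx a) (idx c) * Pn (idx c) (idx b))"
        unfolding P_def Q_def matrix_matrix_mult_def by simp
      also have "\<dots> = (\<Sum>k<?n. Qn (idx a) k * Pn k (idx b))"
        by (rule sum_idx)
      also have "\<dots> = (if a = b then 1 else 0)" using H2 idx_lt[of a] idx_lt[of b] by simp
      finally show "(Q ** P) $ a $ b = Finite_Cartesian_Product.mat 1 $ a $ b"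
        unfolding Finite_Cartesian_Product.mat_def by simp
    qed
    show "cmat C = P ** (J ** Q)"
    proof (intro vec_ext)
      fix a b
      have "cmat C $ a $ b = cmat C $ ix (idx a) $ ix (idx b)" by simp
      also have "\<dots> = (\<Sum>k<?n. Pn (idx a) k * (\<Sum>l<?n. Jn k l * Qn l (idx b)))"
        using H3[rule_format, OF idx_lt idx_lt] by simp
      also have "\<dots> = (\<Sum>(c::'n)\<in>UNIV. Pn (idx a) (idx c) * (\<Sum>(d::'n)\<in>UNIV. Jn (idx c) (idx d) * Qn (idx d) (idx b)))"
        by (subst sum_idx[symmetric], subst sum_idx[symmetric], rule refl)
      also have "\<dots> = (P ** (J ** Q)) $ a $ b"
        unfolding P_def Q_def J_def matrix_matrix_mult_def by simp
      finally show "cmat C $ a $ b = (P ** (J ** Q)) $ a $ b" .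
    qed
    show "J $ a $ b = (if a = b then lam (idx a) else if idx b = Suc (idx a) \<and> L (idx a) then 1 else 0)" for a b
    proof -
      have e: "Jn (idx a) (idx b) \<noteq> 0 \<Longrightarrow> idx b = idx a \<or> idx b = Suc (idx a)"
        using H4 idx_lt by blast
      have "Jn (idx a) (idx b) = (if a = b then lam (idx a) else if idx b = Suc (idx a) \<and> L (idx a) then 1 else 0)"
      proof (cases "a = b")
        case True then show ?thesis unfolding lam_def by simp
      next
        case False
        show ?thesis
        proof (cases "idx b = Suc (idx a)")
          case True
          then have "Suc (idx a) < ?n" using idx_lt[of b] by simp
          then have "Jn (idx a) (idx b) = 0 \<or> Jn (idx a) (idx b) = 1" using H5 True by simp
          moreover have "L (idx a) \<longleftrightarrow> Jn (idx a) (idx b) = 1"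
            unfolding L_def using True \<open>Suc (idx a) < ?n\<close> by simp
          ultimately show ?thesis using False True by (metis zero_neq_one)
        next
          case F2: False
          then have "Jn (idx a) (idx b) = 0" using e False by (metis idx_eq_iff)
          then show ?thesis using False F2 by simp
        qed
      qed
      then show ?thesis unfolding J_def by simp
    qed
    show "L i \<Longrightarrow> Suc i < ?n \<and> lam (Suc i) = lam i" for i
      using H6 unfolding L_def lam_def by simp
  qed
qed

lemma mm_sub_left: "(A::'a::ring_1^'n^'m) ** (B - C) = A ** B - A ** C"
  by (simp add: matrix_matrix_mult_def Finite_Cartesian_Product.vec_eq_iff algebra_simps sum_subtractf)

lemma mm_sub_right: "((B::'a::ring_1^'n^'m) - C) ** A = B ** A - C ** A"
  by (simp add: matrix_matrix_mult_def Finite_Cartesian_Product.vec_eq_iff algebra_simps sum_subtractf)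

lemma mat_comm: "(Finite_Cartesian_Product.mat k :: 'a::comm_ring_1^'n^'n) ** A = A ** Finite_Cartesian_Product.mat k"
proof -
  have l: "(\<Sum>c\<in>UNIV. (if a = c then k else 0) * A $ c $ b) = k * A $ a $ b" for a b
    by (simp add: if_distrib[of "\<lambda>x. x * _"] cong: if_cong)
  have r: "(\<Sum>c\<in>UNIV. A $ a $ c * (if c = b then k else 0)) = k * A $ a $ b" for a b
    by (simp add: if_distrib[of "\<lambda>x. _ * x"] mult.commute cong: if_cong)
  show ?thesis
    by (simp add: matrix_matrix_mult_def Finite_Cartesian_Product.vec_eq_iff Finite_Cartesian_Product.mat_def l r)
qed

definition lift :: "complex^'n^'m \<Rightarrow> complex poly^'n^'m" where "lift M = (\<chi> i j. [:M$i$j:])"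

lemma lift_mult: "lift (A ** B) = lift A ** lift B"
  by (simp add: lift_def matrix_matrix_mult_def Finite_Cartesian_Product.vec_eq_iff mult_to_poly sum_to_poly mult.commute)

lemma lift_one: "lift (Finite_Cartesian_Product.mat 1) = Finite_Cartesian_Product.mat 1"
  by (simp add: lift_def Finite_Cartesian_Product.vec_eq_iff Finite_Cartesian_Product.mat_def)

lemma charpoly_jordan:
  fixes C :: "real^('n::{finite,wellorder})^('n::{finite,wellorder})"
    and P Q J :: "complex^('n::{finite,wellorder})^('n::{finite,wellorder})"
  assumes PQ: "P ** Q = Finite_Cartesian_Product.mat 1" and C: "cmat C = P ** (J ** Q)"
    and J: "\<And>a b. J $ a $ b = (if a = b then lam (idx a) else if idx b = Suc (idx a) \<and> L (idx a) then 1 else 0)"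
  shows "charpoly C = (\<Prod>i<CARD('n). [:- lam i, 1:])"
proof -
  let ?X = "Finite_Cartesian_Product.mat [:0,1:] :: complex poly^('n::{finite,wellorder})^('n::{finite,wellorder})"
  have "charpoly C = Determinants.det (?X - lift (cmat C))"
    unfolding charpoly_def lift_def cmat_def
    by (rule arg_cong[where f = Determinants.det])
       (simp add: Finite_Cartesian_Product.vec_eq_iff Finite_Cartesian_Product.mat_def)
  also have "?X - lift (cmat C) = lift P ** ((?X - lift J) ** lift Q)"
  proof -
    have "lift P ** (?X ** lift Q) = ?X"
      by (simp add: mat_comm matrix_mul_assoc lift_mult[symmetric] PQ lift_one)
    then show ?thesis
      by (simp add: C mm_sub_left mm_sub_right lift_mult)
  qed
  also have "Determinants.det \<dots> = Determinants.det (lift P) * Determinants.det (lift Q) * Determinants.det (?X - lift J)"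
    by (simp add: det_mul)
  also have "Determinants.det (lift P) * Determinants.det (lift Q) = 1"
    by (simp add: det_mul[symmetric] lift_mult[symmetric] PQ lift_one)
  also have "Determinants.det (?X - lift J) = (\<Prod>(a::'n)\<in>UNIV. (?X - lift J) $ a $ a)"
  proof (rule det_upperdiagonal)
    fix a b :: 'n assume "a > b"
    then have "idx b < idx a" by (rule idx_mono)
    then show "(?X - lift J) $ a $ b = 0"
      using \<open>a > b\<close> by (simp add: J lift_def Finite_Cartesian_Product.mat_def)
  qed
  also have "\<dots> = (\<Prod>(a::'n)\<in>UNIV. [:- lam (idx a), 1:])"
    by (simp add: J lift_def Finite_Cartesian_Product.mat_def)
  finally show ?thesis using prod.reindex_bij_betw[OF bij_idx[where 'n='n], of "\<lambda>i. [:-lam i,1:]"] by simp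
qed

lemma order_prod_linear:
  "order x (\<Prod>i\<in>A. [:- f i, 1:]) = card {i\<in>A. f i = (x::complex)}" if "finite A"
  using that
proof (induct A rule: finite_induct)
  case empty
  then show ?case by (simp add: order_1_eq_0)
next
  case (insert a A)
  have nz1: "(\<Prod>i\<in>A. [:- f i, 1:]) \<noteq> 0"
    using insert.hyps(1) by (subst prod_zero_iff) auto
  have nz: "[:- f a, 1:] * (\<Prod>i\<in>A. [:- f i, 1:]) \<noteq> 0"
    using nz1 by (simp only: mult_eq_0_iff) simp
  have "{i \<in> insert a A. f i = x} = (if f a = x then insert a {i \<in> A. f i = x} else {i \<in> A. f i = x})"
    by auto
  moreover have "(\<Prod>i\<in>insert a A. [:- f i, 1:]) = [:- f a, 1:] * (\<Prod>i\<in>A. [:- f i, 1:])"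
    by (simp only: prod.insert[OF insert.hyps(1,2)])
  moreover have "order x [:- f a, 1:] = (if f a = x then 1 else 0)"
    by (simp add: order_linear')
  moreover have "finite {i \<in> A. f i = x}" "a \<notin> {i \<in> A. f i = x}" using insert.hyps by auto
  ultimately show ?case using insert.hyps(3) order_mult[OF nz, of x]
    by (simp only:) (auto simp: card_insert_if)
qed

lemma mv_comp: "(A *v x) $ i = (\<Sum>j\<in>UNIV. A $ i $ j * x $ j)"
  by (simp add: matrix_vector_mult_def)

context
  fixes J :: "complex^('n::{finite,wellorder})^('n::{finite,wellorder})"
    and lam :: "nat \<Rightarrow> complex" and L :: "nat \<Rightarrow> bool"
  assumes J: "\<And>a b. J $ a $ b = (if a = b then lam (idx a) else if idx b = Suc (idx a) \<and> L (idx a) then 1 else 0)"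
    and Lp: "\<And>i. L i \<Longrightarrow> Suc i < CARD('n) \<and> lam (Suc i) = lam i"
begin

lemma J_mulv: "(J *v w) $ a = lam (idx a) * w $ a + (if L (idx a) then w $ ix (Suc (idx a)) else 0)"
proof (cases "L (idx a)")
  case False
  have "(J *v w) $ a = (\<Sum>b\<in>UNIV. (if b = a then lam (idx a) * w $ a else 0))"
    unfolding mv_comp
  proof (rule sum.cong)
    fix b :: 'n
    show "J $ a $ b * w $ b = (if b = a then lam (idx a) * w $ a else 0)"
      using False by (auto simp: J)
  qed simp
  then show ?thesis using False by simp
next
  case True
  let ?c = "ix (Suc (idx a)) :: 'n"
  have ic: "idx ?c = Suc (idx a)" using Lp[OF True] by simp
  then have ca: "?c \<noteq> a" by auto
  have "(J *v w) $ a = (\<Sum>b\<in>UNIV. (if b = a then lam (idx a) * w $ a else 0) + (if b = ?c then w $ ?c else 0))"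
    unfolding mv_comp
  proof (rule sum.cong)
    fix b :: 'n
    have "idx b = Suc (idx a) \<longleftrightarrow> b = ?c" using ic idx_eq_iff by metis
    then show "J $ a $ b * w $ b = (if b = a then lam (idx a) * w $ a else 0) + (if b = ?c then w $ ?c else 0)"
      using True ca by (auto simp: J)
  qed simp
  also have "\<dots> = lam (idx a) * w $ a + w $ ?c"
    by (simp add: sum.distrib)
  finally show ?thesis using True by simp
qed

lemma J_eig1:
  assumes ev: "J *v w = \<mu> *s w"
  shows "lam (idx a) \<noteq> \<mu> \<Longrightarrow> w $ a = 0"
proof (induction "CARD('n) - idx a" arbitrary: a rule: less_induct)
  case less
  have eq: "lam (idx a) * w $ a + (if L (idx a) then w $ ix (Suc (idx a)) else 0) = \<mu> * w $ a"
    using ev J_mulv[of w a] by (metis vector_smult_component)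
  show ?case
  proof (cases "L (idx a)")
    case False
    then show ?thesis using eq less.prems by simp
  next
    case True
    let ?c = "ix (Suc (idx a)) :: 'n"
    have ic: "idx ?c = Suc (idx a)" using Lp[OF True] by simp
    have "lam (idx ?c) \<noteq> \<mu>" using ic Lp[OF True] less.prems by simp
    moreover have "CARD('n) - idx ?c < CARD('n) - idx a" using ic Lp[OF True] by linarith
    ultimately have "w $ ?c = 0" using less.hyps by blast
    then show ?thesis using eq less.prems True by simp
  qed
qed

lemma J_eig2:
  assumes ev: "J *v w = \<mu> *s w" and L: "L j" and a: "idx a = Suc j"
  shows "w $ a = 0"
proof -
  let ?b = "ix j :: 'n"
  have jn: "Suc j < CARD('n)" and lj: "lam (Suc j) = lam j" using Lp[OF L] by auto
  have ib: "idx ?b = j" using jn by simp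
  have aa: "ix (Suc (idx ?b)) = a" using ib a by (metis ix_idx)
  have e1: "(J *v w) $ ?b = \<mu> * w $ ?b" using ev by simp
  have e2: "(J *v w) $ ?b = lam j * w $ ?b + w $ a" using J_mulv[of w ?b] ib aa L by simp
  have eq: "lam j * w $ ?b + w $ a = \<mu> * w $ ?b" using e1 e2 by simp
  show ?thesis
  proof (cases "lam j = \<mu>")
    case True then show ?thesis using eq by simp
  next
    case False
    then show ?thesis using J_eig1[OF ev, of a] a lj by simp
  qed
qed

definition Tset :: "complex \<Rightarrow> nat set" where
  "Tset \<mu> = {i. i < CARD('n) \<and> lam i = \<mu> \<and> \<not> (\<exists>j. L j \<and> Suc j = i)}"

lemma J_eig_support:
  assumes ev: "J *v w = \<mu> *s w" and "w $ a \<noteq> 0"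
  shows "idx a \<in> Tset \<mu>"
  using J_eig1[OF ev, of a] J_eig2[OF ev, of _ a] assms(2) idx_lt[of a] unfolding Tset_def by (auto dest: sym)

lemma J_eig_span:
  assumes ev: "J *v w = \<mu> *s w"
  shows "w \<in> vec.span ((\<lambda>a. axis a 1) ` {a. idx a \<in> Tset \<mu>})"
proof -
  have "w = (\<Sum>a\<in>UNIV. w $ a *s axis a 1)" by (simp add: basis_expansion)
  also have "\<dots> \<in> vec.span ((\<lambda>a. axis a 1) ` {a. idx a \<in> Tset \<mu>})"
  proof (rule vec.span_sum)
    fix a :: 'n
    show "w $ a *s axis a 1 \<in> vec.span ((\<lambda>a. axis a 1) ` {a. idx a \<in> Tset \<mu>})"
    proof (cases "w $ a = 0")
      case True then show ?thesis by (simp add: vec.span_zero)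
    next
      case False
      then have T: "idx a \<in> Tset \<mu>" by (rule J_eig_support[OF ev])
      have "axis a (1::complex) \<in> (\<lambda>a. axis a 1) ` {a. idx a \<in> Tset \<mu>}" using T by simp
      then show ?thesis by (intro vec.span_scale vec.span_base)
    qed
  qed
  finally show ?thesis .
qed

lemma J_eigvec:
  assumes "i < CARD('n)"
  shows "\<exists>w. w \<noteq> 0 \<and> J *v w = lam i *s w"
proof -
  have "\<forall>i. i < CARD('n) \<longrightarrow> (\<exists>s\<le>i. lam s = lam i \<and> \<not> (\<exists>j. L j \<and> Suc j = s))"
  proof (intro allI)
    fix i show "i < CARD('n) \<longrightarrow> (\<exists>s\<le>i. lam s = lam i \<and> \<not> (\<exists>j. L j \<and> Suc j = s))"
    proof (induction i rule: less_induct)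
      case (less i)
      show ?case
      proof (cases "\<exists>j. L j \<and> Suc j = i")
        case False then show ?thesis by auto
      next
        case True
        then obtain j where j: "L j" "Suc j = i" by blast
        then have "\<exists>s\<le>j. lam s = lam j \<and> \<not> (\<exists>j. L j \<and> Suc j = s)" using less.IH[of j] Lp[OF j(1)] by auto
        then obtain s where s: "s \<le> j" "lam s = lam j" "\<not> (\<exists>j. L j \<and> Suc j = s)" by blast
        show ?thesis
        proof (intro impI exI[of _ s] conjI)
          show "s \<le> i" using s j by simp
          show "lam s = lam i" using s j Lp[OF j(1)] by simp
          show "\<not> (\<exists>j. L j \<and> Suc j = s)" using s by simp
        qed
      qed
    qed
  qed
  then obtain s where s: "s \<le> i" "lam s = lam i" "\<not> (\<exists>j. L j \<and> Suc j = s)" using assms by blast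
  have sn: "s < CARD('n)" using s assms by simp
  let ?w = "axis (ix s) 1 :: complex^('n::{finite,wellorder})"
  have "J *v ?w = lam i *s ?w"
  proof (rule vec_ext)
    fix a :: 'n
    have "L (idx a) \<Longrightarrow> ix (Suc (idx a)) \<noteq> (ix s :: 'n)"
      using s(3) Lp sn by (metis idx_ix)
    then show "(J *v ?w) $ a = (lam i *s ?w) $ a"
      unfolding J_mulv using s sn by (auto simp: axis_def)
  qed
  moreover have "?w \<noteq> 0" by (simp add: axis_eq_0_iff)
  ultimately show ?thesis by blast
qed

end

context
  fixes C :: "real^('n::{finite,wellorder})^('n::{finite,wellorder})"
    and P Q J :: "complex^('n::{finite,wellorder})^('n::{finite,wellorder})"
    and lam :: "nat \<Rightarrow> complex" and L :: "nat \<Rightarrow> bool"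
  assumes PQ: "P ** Q = Finite_Cartesian_Product.mat 1" and QP: "Q ** P = Finite_Cartesian_Product.mat 1"
    and Cj: "cmat C = P ** (J ** Q)"
    and J: "\<And>a b. J $ a $ b = (if a = b then lam (idx a) else if idx b = Suc (idx a) \<and> L (idx a) then 1 else 0)"
    and Lp: "\<And>i. L i \<Longrightarrow> Suc i < CARD('n) \<and> lam (Suc i) = lam i"
begin

lemma G_eig_support: "J *v w = \<mu> *s w \<Longrightarrow> w $ a \<noteq> 0 \<Longrightarrow> idx a \<in> Tset TYPE('n) lam L \<mu>"
  apply (rule J_eig_support[where J=J and lam=lam and L=L])
  apply (rule J) apply (erule Lp) apply assumption+ done

lemma G_eig_span: "J *v w = \<mu> *s w \<Longrightarrow> w \<in> vec.span ((\<lambda>a. axis a 1) ` {a. idx a \<in> Tset TYPE('n) lam L \<mu>})"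
  apply (rule J_eig_span[where J=J and lam=lam and L=L])
  apply (rule J) apply (erule Lp) apply assumption+ done

lemma G_eigvec: "i < CARD('n) \<Longrightarrow> \<exists>w. w \<noteq> 0 \<and> J *v w = lam i *s w"
  apply (rule J_eigvec[where J=J and lam=lam and L=L])
  apply (rule J) apply (erule Lp) apply assumption+ done

lemma G_Tset: "Tset TYPE('n) lam L \<mu> = {i. i < CARD('n) \<and> lam i = \<mu> \<and> \<not> (\<exists>j. L j \<and> Suc j = i)}"
  apply (rule Tset_def[where J=J and lam=lam and L=L])
  apply (rule J) apply (erule Lp) done

lemma JQ: "J ** Q = Q ** cmat C"
  by (simp add: Cj matrix_mul_assoc QP)

lemma C_to_J: "cmat C *v v = \<mu> *s v \<Longrightarrow> J *v (Q *v v) = \<mu> *s (Q *v v)"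
proof -
  assume e: "cmat C *v v = \<mu> *s v"
  have "J *v (Q *v v) = (J ** Q) *v v" by (rule matrix_vector_mul_assoc)
  also have "\<dots> = Q *v (cmat C *v v)" by (simp add: JQ matrix_vector_mul_assoc)
  also have "\<dots> = \<mu> *s (Q *v v)" by (simp add: e vector_scalar_commute)
  finally show ?thesis .
qed

lemma PQv: "P *v (Q *v v) = v"
  by (simp add: matrix_vector_mul_assoc PQ)

lemma QPv: "Q *v (P *v v) = v"
  by (simp add: matrix_vector_mul_assoc QP)

lemma cspec_sub: "\<mu> \<in> cspec C \<Longrightarrow> \<exists>i<CARD('n). lam i = \<mu>"
proof -
  assume "\<mu> \<in> cspec C"
  then obtain v where v: "v \<noteq> 0" "cmat C *v v = \<mu> *s v" unfolding cspec_def c_eigenvalue_def by blast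
  have w: "J *v (Q *v v) = \<mu> *s (Q *v v)" by (rule C_to_J[OF v(2)])
  have "Q *v v \<noteq> 0" using v(1) PQv[of v] by (metis matrix_vector_mult_0_right)
  then obtain a where "(Q *v v) $ a \<noteq> 0" by (metis vec_ext zero_index)
  then have "idx a \<in> Tset TYPE('n) lam L \<mu>" by (rule G_eig_support[OF w])
  then show ?thesis unfolding G_Tset by blast
qed

lemma lam_in_cspec: "i < CARD('n) \<Longrightarrow> lam i \<in> cspec C"
proof -
  assume i: "i < CARD('n)"
  obtain w where w: "w \<noteq> 0" "J *v w = lam i *s w" using G_eigvec[OF i] by blast
  have "cmat C *v (P *v w) = lam i *s (P *v w)"
    by (simp add: Cj matrix_vector_mul_assoc[symmetric] QPv w(2) vector_scalar_commute)
  moreover have "P *v w \<noteq> 0" using w(1) QPv[of w] by (metis matrix_vector_mult_0_right)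
  ultimately show ?thesis unfolding cspec_def c_eigenvalue_def by blast
qed

lemma geom_le: "geom_mult C \<mu> \<le> card (Tset TYPE('n) lam L \<mu>)"
proof -
  let ?A = "{a::'n. idx a \<in> Tset TYPE('n) lam L \<mu>}"
  let ?B = "(\<lambda>a. axis a (1::complex)) ` ?A"
  have "{v. cmat C *v v = \<mu> *s v} \<subseteq> vec.span ((*v) P ` ?B)"
  proof
    fix v assume "v \<in> {v. cmat C *v v = \<mu> *s v}"
    then have "J *v (Q *v v) = \<mu> *s (Q *v v)" using C_to_J by blast
    then have "Q *v v \<in> vec.span ?B" by (rule G_eig_span)
    then have "P *v (Q *v v) \<in> (*v) P ` vec.span ?B" by blast
    then show "v \<in> vec.span ((*v) P ` ?B)" by (simp add: vec.span_image PQv)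
  qed
  then have "vec.dim {v. cmat C *v v = \<mu> *s v} \<le> card ((*v) P ` ?B)"
    by (rule vec.dim_le_card) simp
  also have "\<dots> \<le> card ?A"
    by (rule le_trans[OF card_image_le card_image_le]) simp_all
  also have "card ?A = card (Tset TYPE('n) lam L \<mu>)"
  proof -
    have "idx ` ?A = Tset TYPE('n) lam L \<mu>"
    proof
      show "idx ` ?A \<subseteq> Tset TYPE('n) lam L \<mu>" by auto
      show "Tset TYPE('n) lam L \<mu> \<subseteq> idx ` ?A"
      proof
        fix i assume i: "i \<in> Tset TYPE('n) lam L \<mu>"
        then have "i < CARD('n)" unfolding G_Tset by simp
        then have "idx (ix i :: 'n) = i" by simp
        then show "i \<in> idx ` ?A" using i by (metis (mono_tags, lifting) image_eqI mem_Collect_eq)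
      qed
    qed
    moreover have "inj_on idx ?A" using idx_inj by (simp add: inj_on_def)
    ultimately show ?thesis by (metis card_image)
  qed
  finally show ?thesis unfolding geom_mult_def .
qed

lemma alg_eq: "alg_mult C \<mu> = card {i. i < CARD('n) \<and> lam i = \<mu>}"
proof -
  have "alg_mult C \<mu> = order \<mu> (\<Prod>i<CARD('n). [:- lam i, 1:])"
    unfolding alg_mult_def by (simp add: charpoly_jordan[OF PQ Cj J])
  also have "\<dots> = card {i\<in>{..<CARD('n)}. lam i = \<mu>}" by (rule order_prod_linear) simp
  finally show ?thesis by simp
qed

lemma defective_link: "L j \<Longrightarrow> defective C (lam j)"
proof -
  assume Lj: "L j"
  have jn: "Suc j < CARD('n)" and lj: "lam (Suc j) = lam j" using Lp[OF Lj] by auto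
  have "Tset TYPE('n) lam L (lam j) \<subset> {i. i < CARD('n) \<and> lam i = lam j}"
  proof
    show "Tset TYPE('n) lam L (lam j) \<subseteq> {i. i < CARD('n) \<and> lam i = lam j}" unfolding G_Tset by auto
    have "Suc j \<in> {i. i < CARD('n) \<and> lam i = lam j}" using jn lj by simp
    moreover have "Suc j \<notin> Tset TYPE('n) lam L (lam j)" unfolding G_Tset using Lj by auto
    ultimately show "Tset TYPE('n) lam L (lam j) \<noteq> {i. i < CARD('n) \<and> lam i = lam j}" by blast
  qed
  then have "card (Tset TYPE('n) lam L (lam j)) < card {i. i < CARD('n) \<and> lam i = lam j}"
    by (rule psubset_card_mono[rotated]) simp
  then show ?thesis unfolding defective_def alg_eq using geom_le[of "lam j"] by linarith
qed

end

lemma re_cnj_ge: "- ((cmod a)\<^sup>2 + (cmod b)\<^sup>2) / 2 \<le> Re (cnj a * b)"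
proof -
  have "\<bar>Re (cnj a * b)\<bar> \<le> cmod (cnj a * b)" by (rule abs_Re_le_cmod)
  also have "\<dots> = cmod a * cmod b" by (simp add: norm_mult)
  also have "\<dots> \<le> ((cmod a)\<^sup>2 + (cmod b)\<^sup>2) / 2"
    using sum_squares_bound[of "cmod a" "cmod b"] by (simp add: power2_eq_square)
  finally show ?thesis by linarith
qed

lemma re_cnj_self: "Re (cnj a * a) = (cmod a)\<^sup>2"
  by (simp add: complex_mult_cnj cmod_def power2_eq_square)

lemma sum_shift_link:
  fixes q :: "nat \<Rightarrow> real"
  assumes "\<And>i. L i \<Longrightarrow> Suc i < n"
  shows "(\<Sum>i<n. (if L i then q (Suc i) else 0)) = (\<Sum>j<n. (if 0 < j \<and> L (j - 1) then q j else 0))"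
proof -
  let ?g = "\<lambda>j. if 0 < j \<and> L (j - 1) then q j else 0"
  have "(\<Sum>j<Suc n. ?g j) = ?g 0 + (\<Sum>i<n. ?g (Suc i))" by (rule sum.lessThan_Suc_shift)
  also have "\<dots> = (\<Sum>i<n. (if L i then q (Suc i) else 0))" by simp
  finally have "(\<Sum>i<n. (if L i then q (Suc i) else 0)) = (\<Sum>j<n. ?g j) + ?g n" by simp
  moreover have "?g n = 0" using assms[of "n - 1"] by auto
  ultimately show ?thesis by simp
qed

lemma nat_ineq:
  fixes z lam :: "nat \<Rightarrow> complex" and \<delta> c :: real
  assumes d: "\<delta> \<ge> 0"
    and low: "\<And>i. i < n \<Longrightarrow> c \<le> Re (lam i)"
    and lk: "\<And>i. L i \<Longrightarrow> Suc i < n \<and> c + \<delta> \<le> Re (lam i) \<and> c + \<delta> \<le> Re (lam (Suc i))"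
  shows "c * (\<Sum>i<n. (cmod (z i))\<^sup>2) \<le> Re (\<Sum>i<n. cnj (z i) * (lam i * z i + (if L i then of_real \<delta> * z (Suc i) else 0)))"
proof -
  let ?q = "\<lambda>i. (cmod (z i))\<^sup>2"
  have trm: "Re (cnj (z i) * (lam i * z i + (if L i then of_real \<delta> * z (Suc i) else 0)))
      \<ge> Re (lam i) * ?q i - (if L i then \<delta> / 2 * (?q i + ?q (Suc i)) else 0)" for i
  proof -
    have e: "Re (cnj (z i) * (lam i * z i + (if L i then of_real \<delta> * z (Suc i) else 0)))
       = Re (lam i) * ?q i + (if L i then \<delta> * Re (cnj (z i) * z (Suc i)) else 0)"
    proof -
      have "cnj (z i) * (lam i * z i) = lam i * (cnj (z i) * z i)" by (simp add: algebra_simps)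
      moreover have "Re (lam i * (cnj (z i) * z i)) = Re (lam i) * ?q i"
        by (simp add: complex_mult_cnj cmod_def power2_eq_square)
      ultimately show ?thesis by (simp add: distrib_left mult.left_commute)
    qed
    show ?thesis
    proof (cases "L i")
      case True
      have "\<delta> * (- (?q i + ?q (Suc i)) / 2) \<le> \<delta> * Re (cnj (z i) * z (Suc i))"
        by (rule mult_left_mono[OF re_cnj_ge d])
      then show ?thesis using e True by (simp add: field_simps)
    next
      case False then show ?thesis using e by simp
    qed
  qed
  have "Re (\<Sum>i<n. cnj (z i) * (lam i * z i + (if L i then of_real \<delta> * z (Suc i) else 0)))
     = (\<Sum>i<n. Re (cnj (z i) * (lam i * z i + (if L i then of_real \<delta> * z (Suc i) else 0))))"
    by (rule Re_sum)
  also have "\<dots> \<ge> (\<Sum>i<n. Re (lam i) * ?q i - (if L i then \<delta> / 2 * (?q i + ?q (Suc i)) else 0))"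
    by (rule sum_mono) (rule trm)
  finally have 1: "Re (\<Sum>i<n. cnj (z i) * (lam i * z i + (if L i then of_real \<delta> * z (Suc i) else 0)))
     \<ge> (\<Sum>i<n. Re (lam i) * ?q i - (if L i then \<delta> / 2 * (?q i + ?q (Suc i)) else 0))" .
  have 2: "(\<Sum>i<n. Re (lam i) * ?q i - (if L i then \<delta> / 2 * (?q i + ?q (Suc i)) else 0))
     = (\<Sum>i<n. (Re (lam i) - (if L i then \<delta> / 2 else 0)) * ?q i) - \<delta> / 2 * (\<Sum>i<n. (if L i then ?q (Suc i) else 0))"
  proof -
    have "(\<Sum>i<n. Re (lam i) * ?q i - (if L i then \<delta> / 2 * (?q i + ?q (Suc i)) else 0))
      = (\<Sum>i<n. (Re (lam i) - (if L i then \<delta> / 2 else 0)) * ?q i - \<delta> / 2 * (if L i then ?q (Suc i) else 0))"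
      by (rule sum.cong) (auto simp: algebra_simps)
    also have "\<dots> = (\<Sum>i<n. (Re (lam i) - (if L i then \<delta> / 2 else 0)) * ?q i) - \<delta> / 2 * (\<Sum>i<n. (if L i then ?q (Suc i) else 0))"
      by (simp add: sum_subtractf sum_distrib_left)
    finally show ?thesis .
  qed
  have 3: "(\<Sum>i<n. (if L i then ?q (Suc i) else 0)) = (\<Sum>j<n. (if 0 < j \<and> L (j - 1) then ?q j else 0))"
    by (rule sum_shift_link) (use lk in blast)
  have 4: "c * (\<Sum>i<n. ?q i) \<le> (\<Sum>i<n. (Re (lam i) - (if L i then \<delta> / 2 else 0)) * ?q i) - \<delta> / 2 * (\<Sum>j<n. (if 0 < j \<and> L (j - 1) then ?q j else 0))"
  proof -
    have "c * (\<Sum>i<n. ?q i) = (\<Sum>i<n. c * ?q i)" by (simp add: sum_distrib_left)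
    also have "\<dots> \<le> (\<Sum>i<n. (Re (lam i) - (if L i then \<delta> / 2 else 0)) * ?q i - \<delta> / 2 * (if 0 < i \<and> L (i - 1) then ?q i else 0))"
    proof (rule sum_mono)
      fix i assume "i \<in> {..<n}"
      then have i: "i < n" by simp
      have qn: "?q i \<ge> 0" by simp
      show "c * ?q i \<le> (Re (lam i) - (if L i then \<delta> / 2 else 0)) * ?q i - \<delta> / 2 * (if 0 < i \<and> L (i - 1) then ?q i else 0)"
      proof (cases "L i \<or> (0 < i \<and> L (i - 1))")
        case True
        then have "c + \<delta> \<le> Re (lam i)" using lk[of i] lk[of "i - 1"] by (auto simp: Suc_pred)
        then have "c \<le> Re (lam i) - (if L i then \<delta> / 2 else 0) - (if 0 < i \<and> L (i - 1) then \<delta> / 2 else 0)"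
          using d by auto
        then have "c * ?q i \<le> (Re (lam i) - (if L i then \<delta> / 2 else 0) - (if 0 < i \<and> L (i - 1) then \<delta> / 2 else 0)) * ?q i"
          using qn by (rule mult_right_mono)
        moreover have "(Re (lam i) - (if L i then \<delta> / 2 else 0)) * ?q i - \<delta> / 2 * (if 0 < i \<and> L (i - 1) then ?q i else 0)
           = (Re (lam i) - (if L i then \<delta> / 2 else 0) - (if 0 < i \<and> L (i - 1) then \<delta> / 2 else 0)) * ?q i"
          by (cases "0 < i \<and> L (i - 1)") (auto simp: algebra_simps)
        ultimately show ?thesis by simp
      next
        case False
        then have a: "\<not> L i" and b: "\<not> (0 < i \<and> L (i - 1))" by auto
        have "c * ?q i \<le> Re (lam i) * ?q i" using low[OF i] qn by (rule mult_right_mono)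
        then show ?thesis by (simp only: a b if_False) simp
      qed
    qed
    also have "\<dots> = (\<Sum>i<n. (Re (lam i) - (if L i then \<delta> / 2 else 0)) * ?q i) - \<delta> / 2 * (\<Sum>j<n. (if 0 < j \<and> L (j - 1) then ?q j else 0))"
      by (simp add: sum_subtractf sum_distrib_left)
    finally show ?thesis .
  qed
  have 5: "c * (\<Sum>i<n. ?q i) \<le> (\<Sum>i<n. Re (lam i) * ?q i - (if L i then \<delta> / 2 * (?q i + ?q (Suc i)) else 0))"
    unfolding 2 3 by (rule 4)
  show ?thesis using 5 1 by (rule order_trans)
qed

definition cv :: "real^'n \<Rightarrow> complex^'n" where "cv y = (\<chi> i. complex_of_real (y $ i))"

lemma cv_mult: "cv (C *v y) = cmat C *v cv y"
  by (simp add: cv_def cmat_def matrix_vector_mult_def Finite_Cartesian_Product.vec_eq_iff)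

lemma cv_zero: "cv y = 0 \<Longrightarrow> y = 0"
  by (simp add: cv_def Finite_Cartesian_Product.vec_eq_iff)

definition dg :: "('n \<Rightarrow> complex) \<Rightarrow> complex^'n^'n" where "dg f = (\<chi> a b. if a = b then f a else 0)"

lemma dg_mulv: "(dg f *v x) $ a = f a * x $ a"
proof -
  have "(dg f *v x) $ a = (\<Sum>b\<in>UNIV. (if b = a then f a * x $ a else 0))"
    unfolding mv_comp dg_def by (rule sum.cong) auto
  then show ?thesis by simp
qed

lemma dg_mult: "dg f ** dg g = dg (\<lambda>a. f a * g a)"
proof -
  have "(\<Sum>c\<in>UNIV. (if a = c then f a else 0) * (if c = b then g c else 0)) = (if a = b then f a * g a else 0)" for a b
  proof -
    have "(\<Sum>c\<in>UNIV. (if a = c then f a else 0) * (if c = b then g c else 0)) = (\<Sum>c\<in>UNIV. (if c = a then (if a = b then f a * g a else 0) else 0))"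
      by (rule sum.cong) auto
    then show ?thesis by simp
  qed
  then show ?thesis by (simp add: dg_def matrix_matrix_mult_def Finite_Cartesian_Product.vec_eq_iff)
qed

lemma dg_one: "dg (\<lambda>a. 1) = Finite_Cartesian_Product.mat 1"
  by (simp add: dg_def Finite_Cartesian_Product.mat_def)

lemma form_eq:
  fixes M :: "complex^'n^'n" and y w :: "real^'n"
  defines "R \<equiv> (\<chi> a b. Re (\<Sum>k\<in>UNIV. cnj (M $ k $ a) * M $ k $ b))"
  shows "y \<bullet> (R *v w) = Re (\<Sum>k\<in>UNIV. cnj ((M *v cv y) $ k) * (M *v cv w) $ k)"
proof -
  have "y \<bullet> (R *v w) = (\<Sum>a\<in>UNIV. \<Sum>b\<in>UNIV. \<Sum>k\<in>UNIV. Re (cnj (M $ k $ a * of_real (y $ a)) * (M $ k $ b * of_real (w $ b))))"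
    unfolding inner_vec_def R_def mv_comp
    by (simp add: sum_distrib_left sum_distrib_right Re_sum mult_ac distrib_left sum.distrib)
  also have "\<dots> = (\<Sum>k\<in>UNIV. \<Sum>a\<in>UNIV. \<Sum>b\<in>UNIV. Re (cnj (M $ k $ a * of_real (y $ a)) * (M $ k $ b * of_real (w $ b))))"
    by (subst sum.swap) (subst (2) sum.swap, rule refl)
  also have "\<dots> = Re (\<Sum>k\<in>UNIV. cnj ((M *v cv y) $ k) * (M *v cv w) $ k)"
    unfolding mv_comp cv_def
    apply (simp add: Re_sum cnj_sum sum_distrib_left sum_distrib_right)
    apply (rule arg_cong2[where f="(+)"]; rule sum.cong[OF refl]; rule sum.swap)
    done
  finally show ?thesis .
qed

lemma sum_cmod_pos: "z \<noteq> (0::complex^'n) \<Longrightarrow> 0 < (\<Sum>k\<in>UNIV. (cmod (z $ k))\<^sup>2)"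
proof -
  assume "z \<noteq> 0"
  then obtain k where k: "z $ k \<noteq> 0" by (metis vec_ext zero_index)
  show ?thesis by (rule sum_pos2[of UNIV k]) (use k in auto)
qed

context
  fixes C :: "real^('n::{finite,wellorder})^('n::{finite,wellorder})"
    and P Q J :: "complex^('n::{finite,wellorder})^('n::{finite,wellorder})"
    and lam :: "nat \<Rightarrow> complex" and L :: "nat \<Rightarrow> bool"
  assumes PQ: "P ** Q = Finite_Cartesian_Product.mat 1" and QP: "Q ** P = Finite_Cartesian_Product.mat 1"
    and Cj: "cmat C = P ** (J ** Q)"
    and J: "\<And>a b. J $ a $ b = (if a = b then lam (idx a) else if idx b = Suc (idx a) \<and> L (idx a) then 1 else 0)"
    and Lp: "\<And>i. L i \<Longrightarrow> Suc i < CARD('n) \<and> lam (Suc i) = lam i"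
begin

lemma K_mulv: "(J *v w) $ a = lam (idx a) * w $ a + (if L (idx a) then w $ ix (Suc (idx a)) else 0)"
  apply (rule J_mulv[where J=J and lam=lam and L=L])
  apply (rule J) apply (erule Lp) done

lemma construct:
  assumes d: "\<delta> > 0" and low: "\<And>i. i < CARD('n) \<Longrightarrow> c \<le> Re (lam i)"
    and lk: "\<And>i. L i \<Longrightarrow> c + \<delta> \<le> Re (lam i) \<and> c + \<delta> \<le> Re (lam (Suc i))"
  shows "\<exists>R. pos_def R \<and> (\<forall>y. c * (y \<bullet> (R *v y)) \<le> y \<bullet> (R *v (C *v y)))"
proof -
  let ?n = "CARD('n)"
  define dd :: complex where "dd = of_real \<delta>"
  have dd0: "dd \<noteq> 0" using d unfolding dd_def by simp
  define D :: "complex^('n::{finite,wellorder})^('n::{finite,wellorder})" where "D = dg (\<lambda>a. dd ^ idx a)"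
  define Di :: "complex^('n::{finite,wellorder})^('n::{finite,wellorder})" where "Di = dg (\<lambda>a. inverse dd ^ idx a)"
  define M where "M = Di ** Q"
  define R :: "real^('n::{finite,wellorder})^('n::{finite,wellorder})"
    where "R = (\<chi> a b. Re (\<Sum>k\<in>UNIV. cnj (M $ k $ a) * M $ k $ b))"
  have DDi: "D ** Di = Finite_Cartesian_Product.mat 1"
    unfolding D_def Di_def dg_mult dg_one[symmetric] using dd0 by (simp add: power_mult_distrib[symmetric])
  have MC: "M ** cmat C = (Di ** J ** D) ** M"
  proof -
    have DQP: "Di ** Q ** P = Di" by (simp add: matrix_mul_assoc[symmetric] QP)
    have "M ** cmat C = Di ** J ** Q" unfolding M_def Cj by (simp add: matrix_mul_assoc DQP)
    also have "\<dots> = (Di ** J ** D) ** M" unfolding M_def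
      by (simp add: matrix_mul_assoc[symmetric]) (simp add: matrix_mul_assoc DDi)
    finally show ?thesis .
  qed
  have Jd: "((Di ** J ** D) *v z) $ ix i = lam i * z $ ix i + (if L i then dd * z $ ix (Suc i) else 0)"
    if i: "i < ?n" for z i
  proof -
    have "((Di ** J ** D) *v z) = Di *v (J *v (D *v z))" by (simp add: matrix_vector_mul_assoc matrix_mul_assoc)
    then have "((Di ** J ** D) *v z) $ ix i = inverse dd ^ i * (lam i * (dd ^ i * z $ ix i) + (if L i then dd ^ Suc i * z $ ix (Suc i) else 0))"
      unfolding Di_def D_def using i Lp[of i] by (simp add: dg_mulv K_mulv)
    then have "dd ^ i * ((Di ** J ** D) *v z) $ ix i = dd ^ i * (lam i * z $ ix i + (if L i then dd * z $ ix (Suc i) else 0))"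
      using dd0 by (simp add: field_simps power_inverse)
    moreover have "dd ^ i \<noteq> 0" using dd0 by simp
    ultimately show ?thesis by (rule mult_left_cancel[THEN iffD1, rotated])
  qed
  have Minv: "P ** D ** M = Finite_Cartesian_Product.mat 1"
    unfolding M_def by (simp add: matrix_mul_assoc[symmetric]) (simp add: matrix_mul_assoc DDi PQ)
  have form: "y \<bullet> (R *v w) = Re (\<Sum>k\<in>UNIV. cnj ((M *v cv y) $ k) * (M *v cv w) $ k)" for y w
    unfolding R_def by (rule form_eq)
  have quad: "y \<bullet> (R *v y) = (\<Sum>k\<in>UNIV. (cmod ((M *v cv y) $ k))\<^sup>2)" for y
    unfolding form Re_sum re_cnj_self ..
  have "pos_def R"
    unfolding pos_def_def sym_mat_def
  proof
    show "transpose R = R"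
    proof -
      have h: "(\<Sum>k\<in>UNIV. cnj (M $ k $ b) * M $ k $ a) = cnj (\<Sum>k\<in>UNIV. cnj (M $ k $ a) * M $ k $ b)" for a b
        by (simp add: cnj_sum mult.commute)
      have "Re (\<Sum>k\<in>UNIV. cnj (M $ k $ b) * M $ k $ a) = Re (\<Sum>k\<in>UNIV. cnj (M $ k $ a) * M $ k $ b)" for a b
        by (subst h) simp
      then show ?thesis unfolding R_def transpose_def
        by (simp add: Finite_Cartesian_Product.vec_eq_iff)
    qed
    show "\<forall>x. x \<noteq> 0 \<longrightarrow> x \<bullet> (R *v x) > 0"
    proof (intro allI impI)
      fix x :: "real^('n::{finite,wellorder})" assume x: "x \<noteq> 0"
      have "M *v cv x \<noteq> 0"
      proof
        assume "M *v cv x = 0"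
        then have "(P ** D ** M) *v cv x = 0" by (simp flip: matrix_vector_mul_assoc)
        then have "cv x = 0" using Minv by simp
        then show False using x cv_zero by blast
      qed
      then show "x \<bullet> (R *v x) > 0" unfolding quad by (rule sum_cmod_pos)
    qed
  qed
  moreover have "c * (y \<bullet> (R *v y)) \<le> y \<bullet> (R *v (C *v y))" for y
  proof -
    define z where "z = M *v cv y"
    have "M *v cv (C *v y) = (Di ** J ** D) *v z"
      unfolding z_def cv_mult by (simp add: matrix_vector_mul_assoc MC)
    then have "y \<bullet> (R *v (C *v y)) = Re (\<Sum>k\<in>UNIV. cnj (z $ k) * ((Di ** J ** D) *v z) $ k)"
      unfolding form z_def by simp
    also have "\<dots> = Re (\<Sum>i<?n. cnj (z $ ix i) * ((Di ** J ** D) *v z) $ ix i)"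
      by (simp only: sum_ix)
    also have "\<dots> = Re (\<Sum>i<?n. cnj (z $ ix i) * (lam i * z $ ix i + (if L i then of_real \<delta> * z $ ix (Suc i) else 0)))"
      by (rule arg_cong[where f=Re], rule sum.cong, simp, simp add: Jd dd_def)
    finally have e1: "y \<bullet> (R *v (C *v y)) = Re (\<Sum>i<?n. cnj (z $ ix i) * (lam i * z $ ix i + (if L i then of_real \<delta> * z $ ix (Suc i) else 0)))" .
    have e2: "y \<bullet> (R *v y) = (\<Sum>i<?n. (cmod (z $ ix i))\<^sup>2)"
      unfolding quad z_def by (simp only: sum_ix)
    have "c * (\<Sum>i<?n. (cmod (z $ ix i))\<^sup>2) \<le> Re (\<Sum>i<?n. cnj (z $ ix i) * (lam i * z $ ix i + (if L i then of_real \<delta> * z $ ix (Suc i) else 0)))"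
      by (rule nat_ineq[where z = "\<lambda>i. z $ ix i"]) (use d low lk Lp in auto)
    then show ?thesis using e1 e2 by simp
  qed
  ultimately show ?thesis by blast
qed

end

lemma finf_cont: "continuous_on UNIV (finf K)"
  unfolding finf_def by (intro continuous_intros) auto

lemma finf_meas[measurable]: "finf K \<in> borel_measurable borel"
  by (rule borel_measurable_continuous_onI[OF finf_cont])

lemma finf_nonneg: "finf K x \<ge> 0"
  unfolding finf_def by simp

lemma dot_transpose: "(u::real^'n) \<bullet> (A *v v) = (transpose A *v u) \<bullet> v"
proof -
  have "u \<bullet> (A *v v) = (\<Sum>i\<in>UNIV. \<Sum>j\<in>UNIV. u $ i * A $ i $ j * v $ j)"
    by (simp add: inner_vec_def mv_comp sum_distrib_left mult.assoc)
  also have "\<dots> = (\<Sum>j\<in>UNIV. \<Sum>i\<in>UNIV. u $ i * A $ i $ j * v $ j)" by (rule sum.swap)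
  also have "\<dots> = (transpose A *v u) \<bullet> v"
    by (simp add: inner_vec_def mv_comp sum_distrib_left transpose_def mult_ac)
  finally show ?thesis .
qed

lemma quad_bound:
  fixes P :: "real^'n^'n"
  shows "u \<bullet> (P *v u) \<le> (\<Sum>i\<in>UNIV. \<Sum>j\<in>UNIV. \<bar>P $ i $ j\<bar>) * (norm u)\<^sup>2"
proof -
  have "u \<bullet> (P *v u) = (\<Sum>i\<in>UNIV. \<Sum>j\<in>UNIV. u $ i * P $ i $ j * u $ j)"
    by (simp add: inner_vec_def mv_comp sum_distrib_left mult.assoc)
  also have "\<dots> \<le> (\<Sum>i\<in>UNIV. \<Sum>j\<in>UNIV. \<bar>P $ i $ j\<bar> * (norm u)\<^sup>2)"
  proof (intro sum_mono)
    fix i j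
    have "u $ i * P $ i $ j * u $ j \<le> \<bar>u $ i * P $ i $ j * u $ j\<bar>" by simp
    also have "\<dots> = \<bar>P $ i $ j\<bar> * (\<bar>u $ i\<bar> * \<bar>u $ j\<bar>)" by (simp add: abs_mult)
    also have "\<dots> \<le> \<bar>P $ i $ j\<bar> * (norm u * norm u)"
      by (intro mult_left_mono mult_mono component_le_norm_cart) auto
    finally show "u $ i * P $ i $ j * u $ j \<le> \<bar>P $ i $ j\<bar> * (norm u)\<^sup>2" by (simp add: power2_eq_square)
  qed
  also have "\<dots> = (\<Sum>i\<in>UNIV. \<Sum>j\<in>UNIV. \<bar>P $ i $ j\<bar>) * (norm u)\<^sup>2"
    by (simp add: sum_distrib_right)
  finally show ?thesis .
qed

lemma posdef_inj: "pos_def K \<Longrightarrow> K *v x = 0 \<Longrightarrow> x = 0"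
  unfolding pos_def_def by (metis inner_zero_right less_irrefl)

lemma transfer:
  fixes K R C :: "real^'n^'n"
  assumes K: "pos_def K" and R: "pos_def R" and ineq: "\<And>y. c * (y \<bullet> (R *v y)) \<le> y \<bullet> (R *v (C *v y))"
  shows "pos_def (K ** R ** K) \<and>
    mat_ge (Qmat K C ** (K ** R ** K) + (K ** R ** K) ** transpose (Qmat K C)) ((2 * c) *\<^sub>R (K ** R ** K))"
proof -
  have Ks: "transpose K = K" and Rs: "transpose R = R" using K R unfolding pos_def_def sym_mat_def by auto
  have "\<exists>B. B ** K = Finite_Cartesian_Product.mat 1"
    using posdef_inj[OF K] matrix_left_invertible_ker by blast
  then have "invertible K" using invertible_left_inverse by blast
  then have "\<exists>A'. K ** A' = Finite_Cartesian_Product.mat 1 \<and> A' ** K = Finite_Cartesian_Product.mat 1"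
    unfolding invertible_def by blast
  then have Ki: "K ** matrix_inv K = Finite_Cartesian_Product.mat 1" "matrix_inv K ** K = Finite_Cartesian_Product.mat 1"
    unfolding matrix_inv_def by (metis (mono_tags, lifting) someI_ex)+
  let ?Ki = "matrix_inv K"
  have KiT: "transpose ?Ki = ?Ki"
  proof -
    have "transpose ?Ki ** K = Finite_Cartesian_Product.mat 1"
      using arg_cong[OF Ki(1), of transpose] by (simp add: matrix_transpose_mul Ks transpose_mat)
    then have "transpose ?Ki = transpose ?Ki ** (K ** ?Ki)" by (simp add: Ki)
    also have "\<dots> = ?Ki" by (simp add: matrix_mul_assoc \<open>transpose ?Ki ** K = _\<close>)
    finally show ?thesis .
  qed
  let ?P = "K ** R ** K"
  have QP: "Qmat K C ** ?P = K ** transpose C ** R ** K"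
  proof -
    have "Qmat K C ** ?P = K ** transpose C ** (?Ki ** K) ** R ** K"
      unfolding Qmat_def by (simp add: matrix_mul_assoc)
    then show ?thesis by (simp add: Ki)
  qed
  have PQ: "?P ** transpose (Qmat K C) = K ** R ** C ** K"
  proof -
    have "transpose (Qmat K C) = ?Ki ** C ** K"
      unfolding Qmat_def by (simp add: matrix_transpose_mul Ks KiT matrix_mul_assoc)
    then have "?P ** transpose (Qmat K C) = K ** R ** (K ** ?Ki) ** C ** K"
      by (simp add: matrix_mul_assoc)
    then show ?thesis by (simp add: Ki)
  qed
  have e1: "x \<bullet> ((K ** transpose C ** R ** K) *v x) = (K *v x) \<bullet> (R *v (C *v (K *v x)))" for x
  proof -
    have "x \<bullet> ((K ** transpose C ** R ** K) *v x) = x \<bullet> (K *v (transpose C *v (R *v (K *v x))))"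
      by (simp add: matrix_vector_mul_assoc matrix_mul_assoc)
    also have "\<dots> = (K *v x) \<bullet> (transpose C *v (R *v (K *v x)))" by (subst dot_transpose) (simp only: Ks)
    also have "\<dots> = (C *v (K *v x)) \<bullet> (R *v (K *v x))" by (subst dot_transpose) (simp only: Finite_Cartesian_Product.transpose_transpose)
    also have "\<dots> = (R *v (K *v x)) \<bullet> (C *v (K *v x))" by (rule inner_commute)
    also have "\<dots> = (K *v x) \<bullet> (R *v (C *v (K *v x)))" by (subst (2) dot_transpose) (simp only: Rs)
    finally show ?thesis .
  qed
  have e2: "x \<bullet> ((K ** R ** C ** K) *v x) = (K *v x) \<bullet> (R *v (C *v (K *v x)))" for x
  proof -
    have "x \<bullet> ((K ** R ** C ** K) *v x) = x \<bullet> (K *v (R *v (C *v (K *v x))))"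
      by (simp add: matrix_vector_mul_assoc matrix_mul_assoc)
    also have "\<dots> = (K *v x) \<bullet> (R *v (C *v (K *v x)))" by (subst dot_transpose) (simp only: Ks)
    finally show ?thesis .
  qed
  have e3: "x \<bullet> (?P *v x) = (K *v x) \<bullet> (R *v (K *v x))" for x
  proof -
    have "x \<bullet> (?P *v x) = x \<bullet> (K *v (R *v (K *v x)))" by (simp add: matrix_vector_mul_assoc matrix_mul_assoc)
    also have "\<dots> = (K *v x) \<bullet> (R *v (K *v x))" by (subst dot_transpose) (simp only: Ks)
    finally show ?thesis .
  qed
  have "pos_def ?P"
    unfolding pos_def_def sym_mat_def
  proof
    show "transpose ?P = ?P" by (simp add: matrix_transpose_mul Ks Rs matrix_mul_assoc)
    show "\<forall>x. x \<noteq> 0 \<longrightarrow> 0 < x \<bullet> (?P *v x)"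
    proof (intro allI impI)
      fix x :: "real^'n" assume "x \<noteq> 0"
      then have "K *v x \<noteq> 0" using posdef_inj[OF K] by blast
      then show "0 < x \<bullet> (?P *v x)" using R unfolding e3 pos_def_def by blast
    qed
  qed
  moreover have "mat_ge (Qmat K C ** ?P + ?P ** transpose (Qmat K C)) ((2 * c) *\<^sub>R ?P)"
    unfolding mat_ge_def
  proof
    fix x :: "real^'n"
    have "x \<bullet> ((Qmat K C ** ?P + ?P ** transpose (Qmat K C) - (2 * c) *\<^sub>R ?P) *v x)
      = 2 * ((K *v x) \<bullet> (R *v (C *v (K *v x)))) - 2 * c * ((K *v x) \<bullet> (R *v (K *v x)))"
      unfolding QP PQ matrix_vector_mult_diff_rdistrib matrix_vector_mult_add_rdistrib
        scaleR_matrix_vector_assoc[symmetric] inner_diff_right inner_add_right inner_scaleR_right e1 e2 e3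
      by simp
    then show "0 \<le> x \<bullet> ((Qmat K C ** ?P + ?P ** transpose (Qmat K C) - (2 * c) *\<^sub>R ?P) *v x)"
      using ineq[of "K *v x"] by simp
  qed
  ultimately show ?thesis by blast
qed

lemma S_finite:
  assumes "psi_compatible_grad \<psi> K f0 g"
  shows "S_psi K P g < \<infinity>"
proof -
  let ?B = "(\<Sum>i\<in>UNIV. \<Sum>j\<in>UNIV. \<bar>P $ i $ j\<bar>)"
  have gm: "g \<in> borel_measurable lborel" and fin: "(\<integral>\<^sup>+x. ennreal ((norm (g x))\<^sup>2 * finf K x) \<partial>lborel) < \<infinity>"
    using assms unfolding psi_compatible_grad_def by auto
  have m: "(\<lambda>x. ennreal ((norm (g x))\<^sup>2 * finf K x)) \<in> borel_measurable lborel"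
    using gm by measurable
  have B0: "?B \<ge> 0" by (simp add: sum_nonneg)
  show ?thesis unfolding S_psi_def
  proof (rule nn_integral_mult_bounded_inf[OF m fin])
    show "ennreal ?B \<noteq> \<infinity>" by simp
    show "AE x in lborel. ennreal (g x \<bullet> (P *v g x) * finf K x) \<le> ennreal ?B * ennreal ((norm (g x))\<^sup>2 * finf K x)"
    proof (rule AE_I2)
      fix x
      have "g x \<bullet> (P *v g x) * finf K x \<le> ?B * (norm (g x))\<^sup>2 * finf K x"
        using quad_bound[of "g x" P] finf_nonneg[of K x] by (simp add: mult_right_mono)
      then show "ennreal (g x \<bullet> (P *v g x) * finf K x) \<le> ennreal ?B * ennreal ((norm (g x))\<^sup>2 * finf K x)"
        using B0 finf_nonneg[of K x] by (simp add: ennreal_mult[symmetric] ennreal_leI mult.assoc)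
    qed
  qed
qed

theorem lemma4p3:
  fixes C K :: "real^('n::{finite,wellorder})^('n::{finite,wellorder})" and k :: nat
  assumes "CARD('n) \<ge> 2" and "1 \<le> k" and "k < CARD('n)"
    and "condA (Dmat k) C"
    and "pos_def K"
    and "2 *\<^sub>R Dmat k = C ** K + K ** transpose C"
  shows "((\<forall>lam \<in> cspec C. Re lam = mu C \<longrightarrow> \<not> defective C lam) \<longrightarrow>
           (\<exists>P. pos_def P \<and> mat_ge (Qmat K C ** P + P ** transpose (Qmat K C)) ((2 * mu C) *\<^sub>R P)))
       \<and> ((\<exists>lam \<in> cspec C. Re lam = mu C \<and> defective C lam) \<longrightarrow>
           (\<forall>\<epsilon>>0. \<exists>P. pos_def P \<and>
              mat_ge (Qmat K C ** P + P ** transpose (Qmat K C)) ((2 * (mu C - \<epsilon>)) *\<^sub>R P)))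
       \<and> (\<forall>P \<psi> f0 g. pos_def P \<and>
             (\<exists>\<epsilon>\<ge>0. mat_ge (Qmat K C ** P + P ** transpose (Qmat K C)) ((2 * (mu C - \<epsilon>)) *\<^sub>R P))
             \<and> admissible \<psi> \<and> initial_datum \<psi> f0 \<and> psi_compatible_grad \<psi> K f0 g
             \<longrightarrow> S_psi K P g < \<infinity>)"
proof -
  note Kpd = assms(5)
  obtain P0 Q0 J0 :: "complex^('n::{finite,wellorder})^('n::{finite,wellorder})" and lm :: "nat \<Rightarrow> complex" and L :: "nat \<Rightarrow> bool"
    where PQ: "P0 ** Q0 = Finite_Cartesian_Product.mat 1" and QP: "Q0 ** P0 = Finite_Cartesian_Product.mat 1"
      and Cj: "cmat C = P0 ** (J0 ** Q0)"
      and Jd: "\<And>a b. J0 $ a $ b = (if a = b then lm (idx a) else if idx b = Suc (idx a) \<and> L (idx a) then 1 else 0)"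
      and Lp: "\<And>i. L i \<Longrightarrow> Suc i < CARD('n) \<and> lm (Suc i) = lm i"
    by (rule jordan_vec[of C]) blast
  have lamc: "lm i \<in> cspec C" if "i < CARD('n)" for i
    apply (rule lam_in_cspec[where C=C and P=P0 and Q=Q0 and J=J0 and lam=lm and L=L])
    apply (rule PQ) apply (rule QP) apply (rule Cj) apply (rule Jd) apply (erule Lp) apply (rule that) done
  have csub: "\<exists>i<CARD('n). lm i = \<mu>" if "\<mu> \<in> cspec C" for \<mu>
    apply (rule cspec_sub[where C=C and P=P0 and Q=Q0 and J=J0 and lam=lm and L=L])
    apply (rule PQ) apply (rule QP) apply (rule Cj) apply (rule Jd) apply (erule Lp) apply (rule that) done
  have deflink: "defective C (lm j)" if "L j" for j
    apply (rule defective_link[where C=C and P=P0 and Q=Q0 and J=J0 and lam=lm and L=L])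
    apply (rule PQ) apply (rule QP) apply (rule Cj) apply (rule Jd) apply (erule Lp) apply (rule that) done
  have constr: "\<exists>R. pos_def R \<and> (\<forall>y. c * (y \<bullet> (R *v y)) \<le> y \<bullet> (R *v (C *v y)))"
    if "\<delta> > 0" "\<And>i. i < CARD('n) \<Longrightarrow> c \<le> Re (lm i)"
      "\<And>i. L i \<Longrightarrow> c + \<delta> \<le> Re (lm i) \<and> c + \<delta> \<le> Re (lm (Suc i))" for c \<delta>
    apply (rule construct[where C=C and P=P0 and Q=Q0 and J=J0 and lam=lm and L=L])
    apply (rule PQ) apply (rule QP) apply (rule Cj) apply (rule Jd) apply (erule Lp)
    apply (rule that(1)) apply (erule that(2)) apply (erule that(3)) done
  have fin: "finite (cspec C)"
  proof (rule finite_subset)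
    show "cspec C \<subseteq> lm ` {..<CARD('n)}" using csub by blast
  qed simp
  have mule: "mu C \<le> Re (lm i)" if "i < CARD('n)" for i
    unfolding mu_def using fin lamc[OF that] by (intro Min_le) auto
  have final: "\<exists>P. pos_def P \<and> mat_ge (Qmat K C ** P + P ** transpose (Qmat K C)) ((2 * c) *\<^sub>R P)"
    if ex: "\<exists>R. pos_def R \<and> (\<forall>y. c * (y \<bullet> (R *v y)) \<le> y \<bullet> (R *v (C *v y)))" for c
  proof -
    obtain R where R: "pos_def R" "\<And>y. c * (y \<bullet> (R *v y)) \<le> y \<bullet> (R *v (C *v y))" using ex by blast
    show ?thesis using transfer[OF Kpd R(1) R(2)] by blast
  qed
  have part1: "\<exists>P. pos_def P \<and> mat_ge (Qmat K C ** P + P ** transpose (Qmat K C)) ((2 * mu C) *\<^sub>R P)"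
    if H: "\<forall>lam \<in> cspec C. Re lam = mu C \<longrightarrow> \<not> defective C lam"
  proof -
    have strict: "mu C < Re (lm i)" if "L i" for i
    proof -
      have i: "i < CARD('n)" using Lp[OF that] by simp
      have "Re (lm i) \<noteq> mu C" using H lamc[OF i] deflink[OF that] by blast
      then show ?thesis using mule[OF i] by simp
    qed
    define \<delta> where "\<delta> = Min (insert 1 ((\<lambda>i. Re (lm i) - mu C) ` {i. i < CARD('n) \<and> L i}))"
    have fs: "finite (insert 1 ((\<lambda>i. Re (lm i) - mu C) ` {i. i < CARD('n) \<and> L i}))" by simp
    have dpos: "\<delta> > 0" unfolding \<delta>_def using fs strict by (subst Min_gr_iff) auto
    have dle: "\<delta> \<le> Re (lm i) - mu C" if "L i" for i
      unfolding \<delta>_def using fs Lp[OF that] that by (intro Min_le) auto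
    have "\<exists>R. pos_def R \<and> (\<forall>y. mu C * (y \<bullet> (R *v y)) \<le> y \<bullet> (R *v (C *v y)))"
    proof (rule constr[OF dpos])
      show "mu C \<le> Re (lm i)" if "i < CARD('n)" for i using mule[OF that] .
      show "mu C + \<delta> \<le> Re (lm i) \<and> mu C + \<delta> \<le> Re (lm (Suc i))" if "L i" for i
        using dle[OF that] Lp[OF that] by simp
    qed
    then show ?thesis by (rule final)
  qed
  have part2: "\<exists>P. pos_def P \<and> mat_ge (Qmat K C ** P + P ** transpose (Qmat K C)) ((2 * (mu C - \<epsilon>)) *\<^sub>R P)"
    if e: "\<epsilon> > 0" for \<epsilon>
  proof -
    have "\<exists>R. pos_def R \<and> (\<forall>y. (mu C - \<epsilon>) * (y \<bullet> (R *v y)) \<le> y \<bullet> (R *v (C *v y)))"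
    proof (rule constr[OF e])
      show "mu C - \<epsilon> \<le> Re (lm i)" if "i < CARD('n)" for i using mule[OF that] e by simp
      show "mu C - \<epsilon> + \<epsilon> \<le> Re (lm i) \<and> mu C - \<epsilon> + \<epsilon> \<le> Re (lm (Suc i))" if "L i" for i
        using mule[of i] mule[of "Suc i"] Lp[OF that] by simp
    qed
    then show ?thesis by (rule final)
  qed
  show ?thesis
    using part1 part2 S_finite by blast
qed

end
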